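(* Let $M$ be the free $\mathbb{Z}[p^{\pm1}]$-module with free basis $e_1,\dots,e_n,f_1,\dots,f_n$. For $i=1,\dots,n-1$ define module automorphisms $\Theta(\sigma_i):e_i\mapsto e_{i+1}+pf_{i+1},\ e_{i+1}\mapsto e_i-pf_{i+1}$ and $\Theta(\rho_i):e_i\mapsto e_{i+1},\ e_{i+1}\mapsto e_i,\ f_i\mapsto f_{i+1},\ f_{i+1}\mapsto f_i$, all other basis elements being fixed. Then this assignment extends to a linear representation $\Theta:FVB_n\to{\rm Aut}(M)$, and this representation does not preserve the forbidden relations, i.e. for $n\ge3$ and $i=1,\dots,n-2$, $\Theta(\rho_i\sigma_{i+1}\sigma_i)\ne\Theta(\sigma_{i+1}\sigma_i\rho_{i+1})$.
   Context: $FVB_n$ is the flat virtual braid group: generators $\sigma_1,\dots,\sigma_{n-1},\rho_1,\dots,\rho_{n-1}$, relations $\sigma_i\sigma_j=\sigma_j\sigma_i$, $\rho_i\rho_j=\rho_j\rho_i$, $\sigma_i\rho_j=\rho_j\sigma_i$ for $|i-j|\ge2$; $\sigma_i\sigma_{i+1}\sigma_i=\sigma_{i+1}\sigma_i\sigma_{i+1}$; $\rho_i\rho_{i+1}\rho_i=\rho_{i+1}\rho_i\rho_{i+1}$; $\rho_i\rho_{i+1}\sigma_i=\sigma_{i+1}\rho_i\rho_{i+1}$; $\rho_i^2=\sigma_i^2=1$. The forbidden relations are $\rho_i\sigma_{i+1}\sigma_i=\sigma_{i+1}\sigma_i\rho_{i+1}$. Maps are composed on the right: $(fg)(x)=g(f(x))$.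 *)

theory Defs
  imports "HOL-Computational_Algebra.Formal_Laurent_Series"
begin

text \<open>The ring Z[p, p^-1]: Laurent polynomials, i.e. finitely supported formal Laurent
  series over int; the variable p is fls_X.\<close>
definition laurent_poly :: "int fls set" where
  "laurent_poly = {f. finite {k. fls_nth f k \<noteq> 0}}"

abbreviation pvar :: "int fls" where "pvar \<equiv> fls_X"

datatype basis = E nat | F nat

definition basis_set :: "nat \<Rightarrow> basis set" where
  "basis_set n = {E i | i. 1 \<le> i \<and> i \<le> n} \<union> {F i | i. 1 \<le> i \<and> i \<le> n}"

text \<open>The free module M of rank 2n over Z[p^(+-1)], as coordinate vectors supported on the basis.\<close>
definition Mod :: "nat \<Rightarrow> (basis \<Rightarrow> int fls) set" where
  "Mod n = {v. (\<forall>b. b \<notin> basis_set n \<longrightarrow> v b = 0) \<and> (\<forall>b. v b \<in> laurent_poly)}"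

definition unitv :: "basis \<Rightarrow> basis \<Rightarrow> int fls" where
  "unitv b = (\<lambda>c. if c = b then 1 else 0)"

datatype gen = Sig nat | Rho nat

definition fvb_gens :: "nat \<Rightarrow> gen set" where
  "fvb_gens n = {Sig i | i. 1 \<le> i \<and> i < n} \<union> {Rho i | i. 1 \<le> i \<and> i < n}"

fun theta_img :: "gen \<Rightarrow> basis \<Rightarrow> (basis \<Rightarrow> int fls)" where
  "theta_img (Sig i) b =
     (if b = E i then (\<lambda>c. unitv (E (i+1)) c + pvar * unitv (F (i+1)) c)
      else if b = E (i+1) then (\<lambda>c. unitv (E i) c - pvar * unitv (F (i+1)) c)
      else unitv b)"
| "theta_img (Rho i) b =
     (if b = E i then unitv (E (i+1))
      else if b = E (i+1) then unitv (E i)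
      else if b = F i then unitv (F (i+1))
      else if b = F (i+1) then unitv (F i)
      else unitv b)"

definition lin_ext :: "nat \<Rightarrow> (basis \<Rightarrow> (basis \<Rightarrow> int fls)) \<Rightarrow> (basis \<Rightarrow> int fls) \<Rightarrow> (basis \<Rightarrow> int fls)" where
  "lin_ext n img v = (\<lambda>b. \<Sum>c\<in>basis_set n. v c * img c b)"

definition Theta :: "nat \<Rightarrow> gen \<Rightarrow> (basis \<Rightarrow> int fls) \<Rightarrow> (basis \<Rightarrow> int fls)" where
  "Theta n g = lin_ext n (theta_img g)"

text \<open>Image of a word; maps composed on the right: (fg)(x) = g(f(x)).\<close>
fun ThetaW :: "nat \<Rightarrow> gen list \<Rightarrow> (basis \<Rightarrow> int fls) \<Rightarrow> (basis \<Rightarrow> int fls)" where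
  "ThetaW n [] = id"
| "ThetaW n (g # w) = ThetaW n w \<circ> Theta n g"

definition fvb_rels :: "nat \<Rightarrow> (gen list \<times> gen list) set" where
  "fvb_rels n =
     {([Sig i, Sig j], [Sig j, Sig i]) | i j. 1 \<le> i \<and> i < n \<and> 1 \<le> j \<and> j < n \<and> (i + 2 \<le> j \<or> j + 2 \<le> i)}
   \<union> {([Rho i, Rho j], [Rho j, Rho i]) | i j. 1 \<le> i \<and> i < n \<and> 1 \<le> j \<and> j < n \<and> (i + 2 \<le> j \<or> j + 2 \<le> i)}
   \<union> {([Sig i, Rho j], [Rho j, Sig i]) | i j. 1 \<le> i \<and> i < n \<and> 1 \<le> j \<and> j < n \<and> (i + 2 \<le> j \<or> j + 2 \<le> i)}
   \<union> {([Sig i, Sig (i+1), Sig i], [Sig (i+1), Sig i, Sig (i+1)]) | i. 1 \<le> i \<and> i + 1 < n}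
   \<union> {([Rho i, Rho (i+1), Rho i], [Rho (i+1), Rho i, Rho (i+1)]) | i. 1 \<le> i \<and> i + 1 < n}
   \<union> {([Rho i, Rho (i+1), Sig i], [Sig (i+1), Rho i, Rho (i+1)]) | i. 1 \<le> i \<and> i + 1 < n}
   \<union> {([Rho i, Rho i], []) | i. 1 \<le> i \<and> i < n}
   \<union> {([Sig i, Sig i], []) | i. 1 \<le> i \<and> i < n}"

end

theory Submission
  imports Defs
begin

lemma lp_zero[simp]: "0 \<in> laurent_poly" by (simp add: laurent_poly_def)
lemma lp_one[simp]: "1 \<in> laurent_poly"
proof -
  have "{k. fls_nth (1::int fls) k \<noteq> 0} \<subseteq> {0}" by auto
  then show ?thesis unfolding laurent_poly_def using finite_subset by blast
qed
lemma lp_add[simp]: "f \<in> laurent_poly \<Longrightarrow> g \<in> laurent_poly \<Longrightarrow> f + g \<in> laurent_poly"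
  unfolding laurent_poly_def mem_Collect_eq
  by (rule finite_subset[of _ "{k. fls_nth f k \<noteq> 0} \<union> {k. fls_nth g k \<noteq> 0}"]) auto
lemma lp_uminus[simp]: "f \<in> laurent_poly \<Longrightarrow> - f \<in> laurent_poly"
  unfolding laurent_poly_def by simp
lemma lp_diff[simp]: "f \<in> laurent_poly \<Longrightarrow> g \<in> laurent_poly \<Longrightarrow> f - g \<in> laurent_poly"
  using lp_add[of f "-g"] by simp
lemma lp_X[simp]: "f \<in> laurent_poly \<Longrightarrow> pvar * f \<in> laurent_poly"
proof -
  assume a: "f \<in> laurent_poly"
  have "{k. fls_nth (pvar * f) k \<noteq> 0} \<subseteq> (\<lambda>k. k + 1) ` {k. fls_nth f k \<noteq> 0}"
  proof
    fix k assume "k \<in> {k. fls_nth (pvar * f) k \<noteq> 0}"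
    then have "fls_nth f (k - 1) \<noteq> 0" by (simp add: fls_X_times_conv_shift)
    then show "k \<in> (\<lambda>k. k + 1) ` {k. fls_nth f k \<noteq> 0}" by (intro image_eqI[of _ _ "k - 1"]) auto
  qed
  then show ?thesis using a unfolding laurent_poly_def using finite_subset by blast
qed

lemma finite_basis_set[simp]: "finite (basis_set n)"
proof -
  have "basis_set n = E ` {1..n} \<union> F ` {1..n}" unfolding basis_set_def by auto
  then show ?thesis by simp
qed

lemma in_basis_set[simp]: "E i \<in> basis_set n \<longleftrightarrow> 1 \<le> i \<and> i \<le> n" "F i \<in> basis_set n \<longleftrightarrow> 1 \<le> i \<and> i \<le> n"
  unfolding basis_set_def by auto

definition sw :: "nat \<Rightarrow> basis \<Rightarrow> basis" where
  "sw i b = (if b = E i then E (Suc i) else if b = E (Suc i) then E i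
     else if b = F i then F (Suc i) else if b = F (Suc i) then F i else b)"
definition tau :: "nat \<Rightarrow> basis \<Rightarrow> basis" where
  "tau i b = (if b = E i then E (Suc i) else if b = E (Suc i) then E i else b)"

lemma img_rho: "theta_img (Rho i) c b = (if c = sw i b then 1 else 0)"
  by (auto simp: sw_def unitv_def)

lemma img_sig: "theta_img (Sig i) c b = (if c = tau i b then 1 else 0)
   + (if b = F (Suc i) then (if c = E i then pvar else if c = E (Suc i) then - pvar else 0) else 0)"
  by (auto simp: tau_def unitv_def)

definition rhof :: "nat \<Rightarrow> (basis \<Rightarrow> int fls) \<Rightarrow> (basis \<Rightarrow> int fls)" where
  "rhof i v = (\<lambda>b. v (sw i b))"
definition sigf :: "nat \<Rightarrow> (basis \<Rightarrow> int fls) \<Rightarrow> (basis \<Rightarrow> int fls)" where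
  "sigf i v = (\<lambda>b. v (tau i b) + (if b = F (Suc i) then pvar * v (E i) - pvar * v (E (Suc i)) else 0))"

lemma Mod_out: "v \<in> Mod n \<Longrightarrow> b \<notin> basis_set n \<Longrightarrow> v b = 0"
  unfolding Mod_def by auto
lemma Mod_lp[simp]: "v \<in> Mod n \<Longrightarrow> v b \<in> laurent_poly"
  unfolding Mod_def by auto

lemma sw_in: "1 \<le> i \<Longrightarrow> i < n \<Longrightarrow> sw i b \<in> basis_set n \<longleftrightarrow> b \<in> basis_set n"
  unfolding sw_def by (cases b) auto
lemma tau_in: "1 \<le> i \<Longrightarrow> i < n \<Longrightarrow> tau i b \<in> basis_set n \<longleftrightarrow> b \<in> basis_set n"
  unfolding tau_def by (cases b) auto

lemma Theta_rho[simp]: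
  assumes v: "v \<in> Mod n" and i: "1 \<le> i" "i < n"
  shows "Theta n (Rho i) v = rhof i v"
proof
  fix b
  have "Theta n (Rho i) v b = (\<Sum>c\<in>basis_set n. if c = sw i b then v c else 0)"
    unfolding Theta_def lin_ext_def img_rho by (intro sum.cong) auto
  also have "\<dots> = (if sw i b \<in> basis_set n then v (sw i b) else 0)"
    by (simp add: sum.delta')
  also have "\<dots> = rhof i v b" unfolding rhof_def using Mod_out[OF v] by auto
  finally show "Theta n (Rho i) v b = rhof i v b" .
qed

lemma sig_term: "v c * theta_img (Sig i) c b = (if c = tau i b then v c else 0)
   + (if b = F (Suc i) then (if c = E i then v c * pvar else 0) + (if c = E (Suc i) then - (v c * pvar) else 0) else 0)"
  unfolding img_sig
  by (cases "c = E i"; cases "c = E (Suc i)"; cases "c = tau i b"; cases "b = F (Suc i)") (simp_all add: algebra_simps)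

lemma sum_split: "finite S \<Longrightarrow> (\<Sum>c\<in>S. f c + (if P then g c + h c else 0)) = sum f S + (if P then sum g S + sum h S else 0)"
  by (simp add: sum.distrib)

lemma sig_last: "(if tau i b \<in> basis_set n then v (tau i b) else 0)
     + (if b = F (Suc i) then v (E i) * pvar + - (v (E (Suc i)) * pvar) else 0) = sigf i v b"
  if v: "v \<in> Mod n" and i: "1 \<le> i" "i < n"
  unfolding sigf_def using Mod_out[OF v, of "tau i b"] tau_in[OF i(1,2), of b] Mod_out[OF v, of b]
    by (cases "b \<in> basis_set n") (simp_all add: mult.commute)

lemma Theta_sig[simp]:
  assumes v: "v \<in> Mod n" and i: "1 \<le> i" "i < n"
  shows "Theta n (Sig i) v = sigf i v"
proof
  fix b
  have "Theta n (Sig i) v b = (\<Sum>c\<in>basis_set n. (if c = tau i b then v c else 0)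
     + (if b = F (Suc i) then (if c = E i then v c * pvar else 0)
          + (if c = E (Suc i) then - (v c * pvar) else 0) else 0))"
    unfolding Theta_def lin_ext_def sig_term ..
  also have "\<dots> = (\<Sum>c\<in>basis_set n. if c = tau i b then v c else 0)
     + (if b = F (Suc i) then (\<Sum>c\<in>basis_set n. if c = E i then v c * pvar else 0)
          + (\<Sum>c\<in>basis_set n. if c = E (Suc i) then - (v c * pvar) else 0) else 0)"
    by (rule sum_split) simp
  also have "\<dots> = (if tau i b \<in> basis_set n then v (tau i b) else 0)
     + (if b = F (Suc i) then v (E i) * pvar + - (v (E (Suc i)) * pvar) else 0)"
    using i by (simp only: sum.delta sum.delta' finite_basis_set) simp
  also have "\<dots> = sigf i v b" using sig_last[OF v i] .
  finally show "Theta n (Sig i) v b = sigf i v b" .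
qed

lemma rhof_Mod[simp]: "v \<in> Mod n \<Longrightarrow> 1 \<le> i \<Longrightarrow> i < n \<Longrightarrow> rhof i v \<in> Mod n"
  unfolding Mod_def rhof_def using sw_in by auto

lemma sigf_Mod[simp]: "v \<in> Mod n \<Longrightarrow> 1 \<le> i \<Longrightarrow> i < n \<Longrightarrow> sigf i v \<in> Mod n"
  unfolding Mod_def sigf_def using tau_in by auto

lemma rel_rr: "rhof i (rhof i v) = v"
  unfolding rhof_def sw_def by (auto intro!: ext)
lemma rel_ss: "sigf i (sigf i v) = v"
proof
  fix b show "sigf i (sigf i v) b = v b"
    unfolding sigf_def tau_def by (cases b) (auto simp: right_diff_distrib)
qed
lemma rel_rr_c: "i + 2 \<le> j \<or> j + 2 \<le> i \<Longrightarrow> rhof i (rhof j v) = rhof j (rhof i v)"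
proof
  fix b assume "i + 2 \<le> j \<or> j + 2 \<le> i" then show "rhof i (rhof j v) b = rhof j (rhof i v) b"
    unfolding rhof_def sw_def by (cases b) auto
qed
lemma rel_ss_c: "i + 2 \<le> j \<or> j + 2 \<le> i \<Longrightarrow> sigf i (sigf j v) = sigf j (sigf i v)"
proof
  fix b assume "i + 2 \<le> j \<or> j + 2 \<le> i" then show "sigf i (sigf j v) b = sigf j (sigf i v) b"
    unfolding sigf_def tau_def by (cases b) auto
qed
lemma rel_sr_c: "i + 2 \<le> j \<or> j + 2 \<le> i \<Longrightarrow> rhof j (sigf i v) = sigf i (rhof j v)"
proof
  fix b assume "i + 2 \<le> j \<or> j + 2 \<le> i" then show "rhof j (sigf i v) b = sigf i (rhof j v) b"
    unfolding sigf_def tau_def rhof_def sw_def by (cases b) auto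
qed
lemma sigf_pt: "sigf i v (E i) = v (E (Suc i))" "sigf i v (E (Suc i)) = v (E i)"
  "sigf i v (F (Suc i)) = v (F (Suc i)) + pvar * v (E i) - pvar * v (E (Suc i))"
  "b \<noteq> E i \<Longrightarrow> b \<noteq> E (Suc i) \<Longrightarrow> b \<noteq> F (Suc i) \<Longrightarrow> sigf i v b = v b"
  unfolding sigf_def tau_def by auto
lemma rhof_pt: "rhof i v (E i) = v (E (Suc i))" "rhof i v (E (Suc i)) = v (E i)"
  "rhof i v (F i) = v (F (Suc i))" "rhof i v (F (Suc i)) = v (F i)"
  "b \<noteq> E i \<Longrightarrow> b \<noteq> E (Suc i) \<Longrightarrow> b \<noteq> F i \<Longrightarrow> b \<noteq> F (Suc i) \<Longrightarrow> rhof i v b = v b"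
  unfolding rhof_def sw_def by auto

lemma rel_sss: "sigf i (sigf (Suc i) (sigf i v)) = sigf (Suc i) (sigf i (sigf (Suc i) v))"
proof
  fix b
  consider "b = E i" | "b = E (Suc i)" | "b = E (Suc (Suc i))" | "b = F i" | "b = F (Suc i)"
    | "b = F (Suc (Suc i))" | "b \<notin> {E i, E (Suc i), E (Suc (Suc i)), F i, F (Suc i), F (Suc (Suc i))}"
    by blast
  then show "sigf i (sigf (Suc i) (sigf i v)) b = sigf (Suc i) (sigf i (sigf (Suc i) v)) b"
    by cases (simp_all add: sigf_pt rhof_pt algebra_simps)
qed

lemma rel_rrr: "rhof i (rhof (Suc i) (rhof i v)) = rhof (Suc i) (rhof i (rhof (Suc i) v))"
proof
  fix b
  consider "b = E i" | "b = E (Suc i)" | "b = E (Suc (Suc i))" | "b = F i" | "b = F (Suc i)"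
    | "b = F (Suc (Suc i))" | "b \<notin> {E i, E (Suc i), E (Suc (Suc i)), F i, F (Suc i), F (Suc (Suc i))}"
    by blast
  then show "rhof i (rhof (Suc i) (rhof i v)) b = rhof (Suc i) (rhof i (rhof (Suc i) v)) b"
    by cases (simp_all add: sigf_pt rhof_pt algebra_simps)
qed

lemma rel_rrs: "sigf i (rhof (Suc i) (rhof i v)) = rhof (Suc i) (rhof i (sigf (Suc i) v))"
proof
  fix b
  consider "b = E i" | "b = E (Suc i)" | "b = E (Suc (Suc i))" | "b = F i" | "b = F (Suc i)"
    | "b = F (Suc (Suc i))" | "b \<notin> {E i, E (Suc i), E (Suc (Suc i)), F i, F (Suc i), F (Suc (Suc i))}"
    by blast
  then show "sigf i (rhof (Suc i) (rhof i v)) b = rhof (Suc i) (rhof i (sigf (Suc i) v)) b"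
    by cases (simp_all add: sigf_pt rhof_pt algebra_simps)
qed

lemma unitv_Mod: "1 \<le> i \<Longrightarrow> i \<le> n \<Longrightarrow> unitv (F i) \<in> Mod n"
  unfolding Mod_def unitv_def by auto

lemma bij_sig: "1 \<le> i \<Longrightarrow> i < n \<Longrightarrow> bij_betw (Theta n (Sig i)) (Mod n) (Mod n)"
  by (rule bij_betw_byWitness[where f'="Theta n (Sig i)"]) (auto simp: rel_ss)

lemma bij_rho: "1 \<le> i \<Longrightarrow> i < n \<Longrightarrow> bij_betw (Theta n (Rho i)) (Mod n) (Mod n)"
  by (rule bij_betw_byWitness[where f'="Theta n (Rho i)"]) (auto simp: rel_rr)

lemma Theta_bij: "g \<in> fvb_gens n \<Longrightarrow> bij_betw (Theta n g) (Mod n) (Mod n)"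
  unfolding fvb_gens_def using bij_sig bij_rho by blast

lemma Theta_rels:
  assumes uw: "(u, w) \<in> fvb_rels n" and v: "v \<in> Mod n"
  shows "ThetaW n u v = ThetaW n w v"
  using uw unfolding fvb_rels_def
proof (elim UnE CollectE exE conjE)
  fix i j assume "(u, w) = ([Sig i, Sig j], [Sig j, Sig i])" "1 \<le> i" "i < n" "1 \<le> j" "j < n" "i + 2 \<le> j \<or> j + 2 \<le> i"
  then show ?thesis using v rel_ss_c[of i j v] by simp
next
  fix i j assume "(u, w) = ([Rho i, Rho j], [Rho j, Rho i])" "1 \<le> i" "i < n" "1 \<le> j" "j < n" "i + 2 \<le> j \<or> j + 2 \<le> i"
  then show ?thesis using v rel_rr_c[of i j v] by simp
next
  fix i j assume "(u, w) = ([Sig i, Rho j], [Rho j, Sig i])" "1 \<le> i" "i < n" "1 \<le> j" "j < n" "i + 2 \<le> j \<or> j + 2 \<le> i"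
  then show ?thesis using v rel_sr_c[of i j v] by simp
next
  fix i assume "(u, w) = ([Sig i, Sig (i+1), Sig i], [Sig (i+1), Sig i, Sig (i+1)])" "1 \<le> i" "i + 1 < n"
  then show ?thesis using v rel_sss[of i v] by simp
next
  fix i assume "(u, w) = ([Rho i, Rho (i+1), Rho i], [Rho (i+1), Rho i, Rho (i+1)])" "1 \<le> i" "i + 1 < n"
  then show ?thesis using v rel_rrr[of i v] by simp
next
  fix i assume "(u, w) = ([Rho i, Rho (i+1), Sig i], [Sig (i+1), Rho i, Rho (i+1)])" "1 \<le> i" "i + 1 < n"
  then show ?thesis using v rel_rrs[of i v] by simp
next
  fix i assume "(u, w) = ([Rho i, Rho i], [])" "1 \<le> i" "i < n"
  then show ?thesis using v rel_rr[of i v] by simp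
next
  fix i assume "(u, w) = ([Sig i, Sig i], [])" "1 \<le> i" "i < n"
  then show ?thesis using v rel_ss[of i v] by simp
qed

lemma Theta_forb:
  assumes "3 \<le> n" "1 \<le> i" "i \<le> n - 2"
  shows "\<exists>v\<in>Mod n. ThetaW n [Rho i, Sig (i+1), Sig i] v \<noteq> ThetaW n [Sig (i+1), Sig i, Rho (i+1)] v"
proof
  show "unitv (F i) \<in> Mod n" using assms by (intro unitv_Mod) auto
  have "ThetaW n [Rho i, Sig (i+1), Sig i] (unitv (F i)) (F (Suc i)) = 1"
    using assms unitv_Mod[of i n]
    by simp (simp add: sigf_def rhof_def sw_def tau_def unitv_def)
  moreover have "ThetaW n [Sig (i+1), Sig i, Rho (i+1)] (unitv (F i)) (F (Suc i)) = 0"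
    using assms unitv_Mod[of i n]
    by simp (simp add: sigf_def rhof_def sw_def tau_def unitv_def)
  ultimately show "ThetaW n [Rho i, Sig (i+1), Sig i] (unitv (F i)) \<noteq> ThetaW n [Sig (i+1), Sig i, Rho (i+1)] (unitv (F i))"
    by auto
qed

theorem theorem2:
  fixes n :: nat
  shows "(\<forall>g\<in>fvb_gens n. bij_betw (Theta n g) (Mod n) (Mod n))
       \<and> (\<forall>(u, w)\<in>fvb_rels n. \<forall>v\<in>Mod n. ThetaW n u v = ThetaW n w v)
       \<and> (3 \<le> n \<longrightarrow> (\<forall>i. 1 \<le> i \<and> i \<le> n - 2 \<longrightarrow>
            (\<exists>v\<in>Mod n. ThetaW n [Rho i, Sig (i+1), Sig i] v
                        \<noteq> ThetaW n [Sig (i+1), Sig i, Rho (i+1)] v)))"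
  using Theta_bij Theta_rels Theta_forb by fast

end
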